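(* Let $V$ be an infinite-dimensional vector space over a field $\mathbb{F}$ and let $u$ be an endomorphism of $V$ with no dominant eigenvalue. Then, for every scalar $a\in\mathbb{F}$, the endomorphism $u$ is $a$-elementarily decomposable, i.e. there exists an endomorphism $v$ of $V$ such that $v^2=av$ and $u-v$ is elementary.
   Context: A scalar $\lambda$ is a dominant eigenvalue of $u\in\mathrm{End}(V)$ if $\operatorname{rk}(u-\lambda\,\mathrm{id}_V)<\dim V$. For $u\in\mathrm{End}(V)$, $V^u$ denotes the $\mathbb{F}[t]$-module with underlying space $V$ and $t\cdot x:=u(x)$. The endomorphism $u$ is called elementary if $V^u$ is a free $\mathbb{F}[t]$-module. *)

theory Defs
  imports Main "HOL-Library.Equipollence" "HOL-Computational_Algebra.Polynomial"
begin

text \<open>Throughout, V is the whole type 'v, a vector space over the field 'a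
  with scalar multiplication scale.\<close>

text \<open>The rank of f is strictly less than the dimension of V (comparison of
  cardinals): a basis of the range of f is strictly smaller in cardinality than
  a basis of V (by invariance of dimension this does not depend on the bases).\<close>
definition rank_lt_dim :: "('a::field \<Rightarrow> 'v::ab_group_add \<Rightarrow> 'v) \<Rightarrow> ('v \<Rightarrow> 'v) \<Rightarrow> bool" where
  "rank_lt_dim scale f \<longleftrightarrow>
     (\<exists>B C. \<not> module.dependent scale B \<and> module.span scale B = UNIV \<and>
            \<not> module.dependent scale C \<and> module.span scale C = range f \<and> C \<prec> B)"

definition dominant_eigenvalue :: "('a::field \<Rightarrow> 'v::ab_group_add \<Rightarrow> 'v) \<Rightarrow> ('v \<Rightarrow> 'v) \<Rightarrow> 'a \<Rightarrow> bool" where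
  "dominant_eigenvalue scale u c \<longleftrightarrow> rank_lt_dim scale (\<lambda>x. u x - scale c x)"

definition poly_act :: "('a::field \<Rightarrow> 'v::ab_group_add \<Rightarrow> 'v) \<Rightarrow> ('v \<Rightarrow> 'v) \<Rightarrow> 'a poly \<Rightarrow> 'v \<Rightarrow> 'v" where
  "poly_act scale u p x = (\<Sum>i\<le>degree p. scale (coeff p i) ((u ^^ i) x))"

text \<open>u is elementary: V^u is a free F[t]-module, i.e. it has a basis B: every
  vector is uniquely a finite F[t]-linear combination of elements of B.\<close>
definition elementary :: "('a::field \<Rightarrow> 'v::ab_group_add \<Rightarrow> 'v) \<Rightarrow> ('v \<Rightarrow> 'v) \<Rightarrow> bool" where
  "elementary scale u \<longleftrightarrow>
     (\<exists>B. \<forall>x. \<exists>!c :: 'v \<Rightarrow> 'a poly.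
        finite {b. c b \<noteq> 0} \<and> {b. c b \<noteq> 0} \<subseteq> B \<and>
        x = (\<Sum>b\<in>{b. c b \<noteq> 0}. poly_act scale u (c b) b))"

definition infinite_dimensional :: "('a::field \<Rightarrow> 'v::ab_group_add \<Rightarrow> 'v) \<Rightarrow> bool" where
  "infinite_dimensional scale \<longleftrightarrow> \<not> (\<exists>S. finite S \<and> module.span scale S = UNIV)"

end

theory Submission
  imports Defs
begin

locale VS = vector_space scale for scale :: "'a::field \<Rightarrow> 'b::ab_group_add \<Rightarrow> 'b" (infixr \<open>*s\<close> 75)
begin

lemma poly_act_N:
  assumes "degree p \<le> N"
  shows "poly_act scale ww p x = (\<Sum>i\<le>N. coeff p i *s (ww ^^ i) x)"
proof -
  have "(\<Sum>i\<le>N. coeff p i *s (ww ^^ i) x) = (\<Sum>i\<le>degree p. coeff p i *s (ww ^^ i) x)"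
    by (rule sum.mono_neutral_right) (use assms in \<open>auto simp: coeff_eq_0\<close>)
  then show ?thesis by (simp add: poly_act_def)
qed

lemma poly_act_add: "poly_act scale ww (p + q) x = poly_act scale ww p x + poly_act scale ww q x"
proof -
  let ?N = "max (degree p) (degree q)"
  have "degree (p + q) \<le> ?N" by (rule degree_add_le) auto
  then show ?thesis
    by (simp add: poly_act_N[of _ ?N] scale_left_distrib sum.distrib)
qed

lemma poly_act_smult: "poly_act scale ww (smult k p) x = k *s poly_act scale ww p x"
  by (simp add: poly_act_N[of _ "degree p"] scale_sum_right)

lemma poly_act_zero[simp]: "poly_act scale ww 0 x = 0"
  by (simp add: poly_act_def)

lemma poly_act_one[simp]: "poly_act scale ww 1 x = x"
  by (simp add: poly_act_def)

lemma poly_act_pCons0: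
  assumes "Vector_Spaces.linear scale scale ww"
  shows "poly_act scale ww (pCons 0 p) x = ww (poly_act scale ww p x)"
proof -
  interpret L: Vector_Spaces.linear scale scale ww by fact
  have "poly_act scale ww (pCons 0 p) x = (\<Sum>i\<le>Suc (degree p). coeff (pCons 0 p) i *s (ww ^^ i) x)"
    by (rule poly_act_N) (simp add: degree_pCons_le)
  also have "\<dots> = (\<Sum>i\<le>degree p. coeff (pCons 0 p) (Suc i) *s (ww ^^ Suc i) x)"
    by (subst sum.atMost_Suc_shift) simp
  also have "\<dots> = ww (poly_act scale ww p x)"
    by (simp add: poly_act_def L.sum L.scale)
  finally show ?thesis .
qed

end

lemma vs_smult: "vector_space (smult :: 'a::field \<Rightarrow> 'a poly \<Rightarrow> 'a poly)"
  by unfold_locales (auto simp: smult_add_right smult_add_left)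

lemma lin_pCons0: "Vector_Spaces.linear (smult :: 'a::field \<Rightarrow> 'a poly \<Rightarrow> 'a poly) smult (pCons 0)"
  unfolding Vector_Spaces.linear_iff using vs_smult by auto

context VS begin

definition Rpol where "Rpol ww c = (\<Sum>b\<in>{b. c b \<noteq> 0}. poly_act scale ww (c b) b)"

definition Rpr where "Rpr B ww x \<longleftrightarrow> (\<exists>c. finite {b. c b \<noteq> 0} \<and> {b. c b \<noteq> 0} \<subseteq> B \<and> x = Rpol ww c)"

lemma Rpol_superset:
  fixes ww :: "'b \<Rightarrow> 'b"
  shows "finite F \<Longrightarrow> {b. c b \<noteq> 0} \<subseteq> F \<Longrightarrow> Rpol ww c = (\<Sum>b\<in>F. poly_act scale ww (c b) b)"
  unfolding Rpol_def by (rule sum.mono_neutral_left) auto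

lemma Rpr_subspace: "subspace {x. Rpr B ww x}"
proof (rule subspaceI)
  show "0 \<in> {x. Rpr B ww x}"
    unfolding Rpr_def by (rule CollectI, rule exI[of _ "\<lambda>_. 0"]) (simp add: Rpol_def)
next
  fix x y assume "x \<in> {x. Rpr B ww x}" "y \<in> {x. Rpr B ww x}"
  then obtain c c' where c: "finite {b. c b \<noteq> 0}" "{b. c b \<noteq> 0} \<subseteq> B" "x = Rpol ww c"
    and c': "finite {b. c' b \<noteq> 0}" "{b. c' b \<noteq> 0} \<subseteq> B" "y = Rpol ww c'"
    unfolding Rpr_def by auto
  let ?F = "{b. c b \<noteq> 0} \<union> {b. c' b \<noteq> 0}"
  let ?d = "\<lambda>b. c b + c' b"
  have sub: "{b. ?d b \<noteq> 0} \<subseteq> ?F" by auto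
  have fin: "finite ?F" using c c' by auto
  have "Rpol ww ?d = (\<Sum>b\<in>?F. poly_act scale ww (?d b) b)" by (rule Rpol_superset[OF fin sub])
  also have "\<dots> = Rpol ww c + Rpol ww c'"
    by (simp add: poly_act_add sum.distrib Rpol_superset[OF fin])
  finally show "x + y \<in> {x. Rpr B ww x}"
    unfolding Rpr_def using c c' sub fin by (auto intro!: exI[of _ ?d] dest: finite_subset)
next
  fix k x assume "x \<in> {x. Rpr B ww x}"
  then obtain c where c: "finite {b. c b \<noteq> 0}" "{b. c b \<noteq> 0} \<subseteq> B" "x = Rpol ww c"
    unfolding Rpr_def by auto
  let ?d = "\<lambda>b. smult k (c b)"
  have sub: "{b. ?d b \<noteq> 0} \<subseteq> {b. c b \<noteq> 0}" by auto
  have "Rpol ww ?d = (\<Sum>b\<in>{b. c b \<noteq> 0}. poly_act scale ww (?d b) b)" by (rule Rpol_superset[OF c(1) sub])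
  also have "\<dots> = k *s Rpol ww c" by (simp add: poly_act_smult Rpol_def scale_sum_right)
  finally show "k *s x \<in> {x. Rpr B ww x}"
    unfolding Rpr_def using c sub by (auto intro!: exI[of _ ?d] dest: finite_subset)
qed

lemma Rpr_w:
  assumes ww: "Vector_Spaces.linear scale scale ww" and "Rpr B ww x"
  shows "Rpr B ww (ww x)"
proof -
  interpret L: Vector_Spaces.linear scale scale ww by fact
  obtain c where c: "finite {b. c b \<noteq> 0}" "{b. c b \<noteq> 0} \<subseteq> B" "x = Rpol ww c"
    using assms(2) unfolding Rpr_def by auto
  let ?d = "\<lambda>b. pCons 0 (c b)"
  have eq: "{b. ?d b \<noteq> 0} = {b. c b \<noteq> 0}" by auto
  have "Rpol ww ?d = ww (Rpol ww c)"
    unfolding Rpol_def eq by (simp add: poly_act_pCons0[OF ww] L.sum)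
  then show ?thesis unfolding Rpr_def using c eq by (auto intro!: exI[of _ ?d])
qed

lemma Rpr_base: "b \<in> B \<Longrightarrow> Rpr B ww b"
  unfolding Rpr_def
  by (rule exI[of _ "\<lambda>b'. if b' = b then 1 else 0"]) (auto simp: Rpol_def)


lemma free_criterion:
  fixes ww :: "'b \<Rightarrow> 'b" and succ :: "'b \<Rightarrow> 'b"
  assumes D: "independent D" "span D = UNIV" and ww: "Vector_Spaces.linear scale scale ww"
    and R: "wf R" and BD: "B \<subseteq> D"
    and succ_in: "\<And>d. d \<in> D \<Longrightarrow> succ d \<in> D - B"
    and succ_R: "\<And>d. d \<in> D \<Longrightarrow> (d, succ d) \<in> R"
    and succ_inj: "inj_on succ D"
    and succ_onto: "\<And>h. h \<in> D - B \<Longrightarrow> \<exists>d\<in>D. succ d = h"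
    and low: "\<And>d. d \<in> D \<Longrightarrow> ww d - succ d \<in> span {d'\<in>D. (d', succ d) \<in> R}"
  shows "elementary scale ww"
proof -
  interpret L: Vector_Spaces.linear scale scale ww by fact
  define pred where "pred h = (THE d. d \<in> D \<and> succ d = h)" for h
  have pred1: "pred h \<in> D \<and> succ (pred h) = h" if hh: "h \<in> D - B" for h
  proof -
    obtain d where "d \<in> D" "succ d = h" using succ_onto[OF hh] by auto
    then have "pred h = d" unfolding pred_def using succ_inj by (auto intro!: the_equality dest: inj_onD)
    then show ?thesis using \<open>d \<in> D\<close> \<open>succ d = h\<close> by auto
  qed
  have pred2: "pred (succ d) = d" if "d \<in> D" for d
    unfolding pred_def using succ_inj that by (auto intro!: the_equality dest: inj_onD)
  define l where "l h = ww (pred h) - h" for h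
  have l_span: "l h \<in> span {d'\<in>D. (d', h) \<in> R}" if "h \<in> D - B" for h
    using low[of "pred h"] pred1[OF that] unfolding l_def by auto
  have predR: "(pred h, h) \<in> R" if "h \<in> D - B" for h
    using succ_R[of "pred h"] pred1[OF that] by auto
  have repr_R: "(d, h) \<in> R" if "h \<in> D - B" "representation D (l h) d \<noteq> 0" for h d
  proof -
    have "representation D (l h) = representation {d'\<in>D. (d', h) \<in> R} (l h)"
      by (rule representation_extend[OF D(1) l_span[OF that(1)]]) auto
    with that(2) have "representation {d'\<in>D. (d', h) \<in> R} (l h) d \<noteq> 0" by simp
    then show ?thesis by (auto dest: representation_ne_zero)
  qed
  have RD: "Rpr B ww h" if "h \<in> D" for h
    using R that
  proof (induction h rule: wf_induct_rule)
    case (less h)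
    show ?case
    proof (cases "h \<in> B")
      case True then show ?thesis by (rule Rpr_base)
    next
      case False
      then have hDB: "h \<in> D - B" using less by auto
      have "Rpr B ww (pred h)" using less.IH[OF predR[OF hDB]] pred1[OF hDB] by auto
      then have 1: "Rpr B ww (ww (pred h))" by (rule Rpr_w[OF ww])
      have "{d'\<in>D. (d', h) \<in> R} \<subseteq> {x. Rpr B ww x}" using less.IH by auto
      then have "span {d'\<in>D. (d', h) \<in> R} \<subseteq> {x. Rpr B ww x}"
        by (rule span_minimal[OF _ Rpr_subspace])
      then have 2: "Rpr B ww (l h)" using l_span[OF hDB] by auto
      have "h = ww (pred h) - l h" unfolding l_def by simp
      then show ?thesis using 1 2 Rpr_subspace[of B ww] subspace_diff by fastforce
    qed
  qed
  have ex: "Rpr B ww x" for x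
  proof -
    have "D \<subseteq> {x. Rpr B ww x}" using RD by auto
    then have "span D \<subseteq> {x. Rpr B ww x}" by (rule span_minimal[OF _ Rpr_subspace])
    then show ?thesis using D(2) by auto
  qed
  define F where "F f h = (if h \<in> B then (\<lambda>b. if b = h then 1 else 0) else
      (\<lambda>b. pCons 0 (f (pred h) b) - (\<Sum>d | representation D (l h) d \<noteq> 0. smult (representation D (l h) d) (f d b))))"
    for f :: "'b \<Rightarrow> 'b \<Rightarrow> 'a poly" and h
  define Psi where "Psi = wfrec R F"
  have Psi_eq: "Psi h = F Psi h" if "h \<in> D" for h
  proof -
    have "Psi h = F (cut Psi R h) h" unfolding Psi_def by (rule wfrec[OF R])
    also have "\<dots> = F Psi h"
    proof (cases "h \<in> B")
      case True then show ?thesis by (simp add: F_def)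
    next
      case False
      then have hDB: "h \<in> D - B" using that by auto
      show ?thesis unfolding F_def using False
        by (auto simp: cut_apply[OF predR[OF hDB]] cut_apply[OF repr_R[OF hDB]] intro!: ext sum.cong)
    qed
    finally show ?thesis .
  qed
  interpret P: vector_space_pair scale "smult :: 'a \<Rightarrow> 'a poly \<Rightarrow> 'a poly"
    using vs_smult by (simp add: vector_space_pair_def vector_space_axioms)
  define Phi where "Phi b = P.construct D (\<lambda>d. Psi d b)" for b
  have Phi_lin: "Vector_Spaces.linear scale smult (Phi b)" for b
    unfolding Phi_def by (rule P.linear_construct[OF D(1)])
  have Phi_D: "Phi b d = Psi d b" if "d \<in> D" for b d
    unfolding Phi_def by (rule P.construct_basis[OF D(1) that])
  have Phi_span: "Phi b x = (\<Sum>d | representation D x d \<noteq> 0. smult (representation D x d) (Psi d b))" for b x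
  proof -
    interpret M: Vector_Spaces.linear scale smult "Phi b" by (rule Phi_lin)
    have "x = (\<Sum>d | representation D x d \<noteq> 0. representation D x d *s d)"
      using sum_nonzero_representation_eq[OF D(1)] D(2) by auto
    then have "Phi b x = Phi b (\<Sum>d | representation D x d \<noteq> 0. representation D x d *s d)" by simp
    also have "\<dots> = (\<Sum>d | representation D x d \<noteq> 0. smult (representation D x d) (Phi b d))"
      by (simp add: M.sum M.scale)
    also have "\<dots> = (\<Sum>d | representation D x d \<noteq> 0. smult (representation D x d) (Psi d b))"
      by (auto intro!: sum.cong simp: Phi_D dest: representation_ne_zero)
    finally show ?thesis .
  qed
  have Phi_wD: "Phi b (ww d) = pCons 0 (Phi b d)" if "d \<in> D" for b d
  proof -
    interpret M: Vector_Spaces.linear scale smult "Phi b" by (rule Phi_lin)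
    let ?h = "succ d"
    have hDB: "?h \<in> D - B" using succ_in[OF that] .
    have pr: "pred ?h = d" by (rule pred2[OF that])
    have "ww d = ?h + l ?h" unfolding l_def pr by simp
    then have "Phi b (ww d) = Phi b ?h + Phi b (l ?h)" by (simp add: M.add)
    also have "Phi b ?h = Psi ?h b" using hDB by (simp add: Phi_D)
    also have "\<dots> = pCons 0 (Psi d b) - Phi b (l ?h)"
      using Psi_eq[of ?h] hDB pr by (simp add: F_def Phi_span)
    finally show ?thesis using Phi_D[OF that] by simp
  qed
  have Phi_w: "Phi b (ww x) = pCons 0 (Phi b x)" for b x
  proof -
    have l1: "Vector_Spaces.linear scale smult (Phi b \<circ> ww)"
      by (rule Vector_Spaces.linear_compose[OF ww Phi_lin])
    have l2: "Vector_Spaces.linear scale smult (pCons 0 \<circ> Phi b)"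
      by (rule Vector_Spaces.linear_compose[OF Phi_lin lin_pCons0])
    have "(Phi b \<circ> ww) x = (pCons 0 \<circ> Phi b) x"
      by (rule P.linear_eq_on[OF l1 l2, of x D]) (auto simp: D(2) Phi_wD)
    then show ?thesis by simp
  qed
  have Phi_pow: "Phi b ((ww ^^ i) x) = monom 1 i * Phi b x" for b i x
    by (induction i) (auto simp: Phi_w monom_Suc monom_0 one_pCons[symmetric])
  have Phi_act: "Phi b (poly_act scale ww p x) = p * Phi b x" for b p x
  proof -
    interpret M: Vector_Spaces.linear scale smult "Phi b" by (rule Phi_lin)
    have "Phi b (poly_act scale ww p x) = (\<Sum>i\<le>degree p. smult (coeff p i) (monom 1 i * Phi b x))"
      by (simp add: poly_act_def M.sum M.scale Phi_pow)
    also have "\<dots> = (\<Sum>i\<le>degree p. monom (coeff p i) i) * Phi b x"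
      by (simp add: sum_distrib_right smult_monom_mult)
    also have "\<dots> = p * Phi b x" by (simp add: poly_as_sum_of_monoms)
    finally show ?thesis .
  qed
  have Phi_B: "Phi b b' = (if b = b' then 1 else 0)" if "b' \<in> B" for b b'
    using that BD Psi_eq[of b'] by (auto simp: Phi_D F_def)
  have uniq: "c = (\<lambda>b. Phi b x)" if "finite {b. c b \<noteq> 0}" "{b. c b \<noteq> 0} \<subseteq> B" "x = Rpol ww c" for c x
  proof
    fix b
    interpret M: Vector_Spaces.linear scale smult "Phi b" by (rule Phi_lin)
    have "Phi b x = (\<Sum>b'\<in>{b. c b \<noteq> 0}. c b' * Phi b b')"
      using that(3) by (simp add: Rpol_def M.sum Phi_act)
    also have "\<dots> = (\<Sum>b'\<in>{b. c b \<noteq> 0}. (if b = b' then c b' else 0))"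
      using that(2) by (intro sum.cong) (auto simp: Phi_B)
    also have "\<dots> = c b" using that(1) by (auto simp: sum.delta)
    finally show "c b = Phi b x" by simp
  qed
  show ?thesis unfolding elementary_def
  proof (intro exI allI)
    fix x
    obtain c where c: "finite {b. c b \<noteq> 0}" "{b. c b \<noteq> 0} \<subseteq> B" "x = Rpol ww c"
      using ex[of x] unfolding Rpr_def by auto
    show "\<exists>!c. finite {b. c b \<noteq> 0} \<and> {b. c b \<noteq> 0} \<subseteq> B \<and>
        x = (\<Sum>b\<in>{b. c b \<noteq> 0}. poly_act scale ww (c b) b)"
    proof (rule ex1I[of _ c])
      show "finite {b. c b \<noteq> 0} \<and> {b. c b \<noteq> 0} \<subseteq> B \<and> x = (\<Sum>b\<in>{b. c b \<noteq> 0}. poly_act scale ww (c b) b)"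
        using c by (simp add: Rpol_def)
      fix c' assume c': "finite {b. c' b \<noteq> 0} \<and> {b. c' b \<noteq> 0} \<subseteq> B \<and> x = (\<Sum>b\<in>{b. c' b \<noteq> 0}. poly_act scale ww (c' b) b)"
      have "c' = (\<lambda>b. Phi b x)" using c' by (intro uniq) (auto simp: Rpol_def)
      moreover have "c = (\<lambda>b. Phi b x)" using c by (intro uniq) auto
      ultimately show "c' = c" by simp
    qed
  qed
qed

end

context VS begin

lemma indep_lepoll:
  assumes S: "independent S" "S \<subseteq> span A"
  shows "S \<lesssim> A"
proof -
  obtain A' where A': "A' \<subseteq> A" "independent A'" "A \<subseteq> span A'"
    using maximal_independent_subset[of A] by auto
  have spA: "span A \<subseteq> span A'" by (rule span_minimal[OF A'(3) subspace_span])
  obtain S' where S': "S \<subseteq> S'" "S' \<subseteq> span A'" "independent S'" "span A' \<subseteq> span S'"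
    using maximal_independent_subset_extend[of S "span A'"] S spA by auto
  have "span S' \<subseteq> span A'" by (rule span_minimal[OF S'(2) subspace_span])
  then have "span S' = span A'" using S'(4) by (rule antisym)
  then obtain f where "bij_betw f S' A'" using bij_if_span_eq_span_bases S'(3) A'(2) by blast
  then have "S' \<approx> A'" unfolding eqpoll_def by auto
  then have "S \<lesssim> A'" by (rule lepoll_trans[OF subset_imp_lepoll[OF S'(1)] eqpoll_imp_lepoll])
  then show ?thesis by (rule lepoll_trans[OF _ subset_imp_lepoll[OF A'(1)]])
qed

lemma in_span_insert_comb:
  assumes "a \<noteq> 0" "a *s y + b *s x \<in> span A"
  shows "y \<in> span (insert x A)"
proof -
  have "inverse a *s (a *s y + b *s x) \<in> span A" using assms(2) span_scale by blast
  then have "y - (- (b / a)) *s x \<in> span A"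
    using assms(1) by (simp add: scale_right_distrib divide_inverse mult.commute)
  then show ?thesis using span_breakdown_eq by blast
qed

end

locale Setup = VS scale for scale :: "'a::field \<Rightarrow> 'b::ab_group_add \<Rightarrow> 'b" (infixr \<open>*s\<close> 75) +
  fixes u :: "'b \<Rightarrow> 'b" and E :: "'b set"
  assumes lin_u: "Vector_Spaces.linear scale scale u"
    and indepE: "independent E" and spanE: "span E = UNIV" and infE: "infinite E"
    and nodom: "\<And>c C. independent C \<Longrightarrow> span C = range (\<lambda>x. u x - c *s x) \<Longrightarrow> \<not> C \<prec> E"
begin

lemma small_span: "A \<prec> E \<Longrightarrow> span A \<noteq> UNIV"
proof
  assume A: "A \<prec> E" and sp: "span A = UNIV"
  have "E \<lesssim> A" using indep_lepoll[OF indepE] sp by auto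
  then have "A \<approx> E" using A unfolding lesspoll_def by (blast intro: lepoll_antisym)
  then show False using A unfolding lesspoll_def by blast
qed

lemma small_insert: "A \<prec> E \<Longrightarrow> insert x A \<prec> E"
proof (cases "finite A")
  case True then show ?thesis by (intro finite_lesspoll_infinite[OF infE]) simp
next
  case False
  assume "A \<prec> E"
  then show ?thesis by (rule eq_lesspoll_trans[OF infinite_insert_eqpoll[OF False]])
qed

lemma lemmaA:
  assumes A: "A \<prec> E"
  shows "\<exists>x. x \<notin> span A \<and> u x \<notin> span (insert x A)"
proof (rule ccontr)
  interpret U: Vector_Spaces.linear scale scale u by (rule lin_u)
  assume "\<not> ?thesis"
  note nt = this
  have H: "\<exists>k. u x - k *s x \<in> span A" if xA: "x \<notin> span A" for x
  proof -
    have "u x \<in> span (insert x A)" using nt xA by blast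
    then show ?thesis by (simp only: span_breakdown_eq)
  qed
  have nU: "\<exists>z. z \<notin> span X" if "X \<prec> E" for X using small_span[OF that] by auto
  have claim1: "kx = ky" if x: "x \<notin> span A" and y: "y \<notin> span (insert x A)"
    and hx: "u x - kx *s x \<in> span A" and hy: "u y - ky *s y \<in> span A" for x y kx ky
  proof -
    have xy: "x + y \<notin> span A"
    proof
      assume "x + y \<in> span A"
      then have "1 *s y + 1 *s x \<in> span A" by (simp add: add.commute)
      then show False using y in_span_insert_comb[of 1 y 1 x A] by simp
    qed
    obtain k where hk: "u (x + y) - k *s (x + y) \<in> span A" using H[OF xy] by blast
    have "(u (x + y) - k *s (x + y)) - (u x - kx *s x) - (u y - ky *s y) \<in> span A"
      by (rule span_diff[OF span_diff[OF hk hx] hy])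
    moreover have "(u (x + y) - k *s (x + y)) - (u x - kx *s x) - (u y - ky *s y)
        = (ky - k) *s y + (kx - k) *s x"
      by (simp add: U.add scale_right_distrib scale_left_diff_distrib algebra_simps)
    ultimately have comb: "(ky - k) *s y + (kx - k) *s x \<in> span A" by simp
    have "ky = k"
    proof (rule ccontr)
      assume "ky \<noteq> k"
      then have "ky - k \<noteq> 0" by simp
      from in_span_insert_comb[OF this comb] y show False by simp
    qed
    then have kxk: "(kx - k) *s x \<in> span A" using comb by simp
    have "kx = k"
    proof (rule ccontr)
      assume False: "kx \<noteq> k"
      have "inverse (kx - k) *s ((kx - k) *s x) \<in> span A" using span_scale[OF kxk] .
      then have "x \<in> span A" using False by simp
      then show False using x by simp
    qed
    then show ?thesis using \<open>ky = k\<close> by simp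
  qed
  obtain x0 where x0: "x0 \<notin> span A" using nU[OF A] by blast
  obtain k0 where k0: "u x0 - k0 *s x0 \<in> span A" using H[OF x0] by blast
  have claim2: "k = k0" if x: "x \<notin> span A" and hx: "u x - k *s x \<in> span A" for x k
  proof (cases "x \<in> span (insert x0 A)")
    case False
    then show ?thesis using claim1[OF x0 False k0 hx] by simp
  next
    case True
    obtain z where z: "z \<notin> span (insert x (insert x0 A))"
      using nU[OF small_insert[OF small_insert[OF A]]] by blast
    have s1: "span (insert x0 A) \<subseteq> span (insert x (insert x0 A))" by (rule span_mono) blast
    have s2: "span (insert x A) \<subseteq> span (insert x (insert x0 A))" by (rule span_mono) blast
    have s3: "span A \<subseteq> span (insert x0 A)" by (rule span_mono) blast
    have z0: "z \<notin> span (insert x0 A)" using z s1 by blast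
    have z1: "z \<notin> span (insert x A)" using z s2 by blast
    have zA: "z \<notin> span A" using z0 s3 by blast
    obtain kz where kz: "u z - kz *s z \<in> span A" using H[OF zA] by blast
    show ?thesis using claim1[OF x0 z0 k0 kz] claim1[OF x z1 hx kz] by simp
  qed
  have all: "u x - k0 *s x \<in> span A" for x
  proof (cases "x \<in> span A")
    case False
    obtain k where hk: "u x - k *s x \<in> span A" using H[OF False] by blast
    have "k = k0" by (rule claim2[OF False hk])
    then show ?thesis using hk by simp
  next
    case True
    obtain z where z: "z \<notin> span A" using nU[OF A] by blast
    have xz: "x + z \<notin> span A" using span_add_eq[OF True, of z] z by simp
    obtain k1 where h1: "u (x + z) - k1 *s (x + z) \<in> span A" using H[OF xz] by blast
    have "k1 = k0" by (rule claim2[OF xz h1])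
    then have 1: "u (x + z) - k0 *s (x + z) \<in> span A" using h1 by simp
    obtain k2 where h2: "u z - k2 *s z \<in> span A" using H[OF z] by blast
    have "k2 = k0" by (rule claim2[OF z h2])
    then have 2: "u z - k0 *s z \<in> span A" using h2 by simp
    have "(u (x + z) - k0 *s (x + z)) - (u z - k0 *s z) \<in> span A" by (rule span_diff[OF 1 2])
    moreover have "(u (x + z) - k0 *s (x + z)) - (u z - k0 *s z) = u x - k0 *s x"
      by (simp add: U.add scale_right_distrib algebra_simps)
    ultimately show ?thesis by simp
  qed
  define g where "g = (\<lambda>x. u x - k0 *s x)"
  have lin_g: "Vector_Spaces.linear scale scale g"
    unfolding Vector_Spaces.linear_iff
  proof (intro conjI allI)
    show "vector_space scale" by (rule vector_space_axioms)
    show "vector_space scale" by (rule vector_space_axioms)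
    fix x y show "g (x + y) = g x + g y" unfolding g_def by (simp add: U.add scale_right_distrib algebra_simps)
  next
    fix c x
    have "k0 *s (c *s x) = c *s (k0 *s x)" by (rule scale_left_commute)
    then show "g (c *s x) = c *s g x" unfolding g_def
      by (simp only: U.scale scale_right_diff_distrib)
  qed
  interpret G: Vector_Spaces.linear scale scale g by (rule lin_g)
  have sub: "subspace (range g)" by (rule G.subspace_image[OF subspace_UNIV])
  obtain C where C: "C \<subseteq> range g" "independent C" "range g \<subseteq> span C"
    by (rule maximal_independent_subset[of "range g"])
  have spC: "span C = range g" by (rule span_subspace[OF C(1) C(3) sub])
  have "range g \<subseteq> span A" unfolding g_def using all by blast
  then have "C \<lesssim> A" by (rule indep_lepoll[OF C(2) order_trans[OF C(1)]])
  then have "C \<prec> E" using A by (rule lesspoll_trans1)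
  then show False using nodom[OF C(2), of k0] spC unfolding g_def by simp
qed

end

lemma rel_max:
  assumes tr: "trans SO" and irr: "\<And>s. (s, s) \<notin> SO"
    and tot: "\<And>s s'. s \<in> I \<Longrightarrow> s' \<in> I \<Longrightarrow> s \<noteq> s' \<Longrightarrow> (s, s') \<in> SO \<or> (s', s) \<in> SO"
    and J: "finite J" "J \<noteq> {}" "J \<subseteq> I"
  shows "\<exists>m\<in>J. \<forall>j\<in>J. j \<noteq> m \<longrightarrow> (j, m) \<in> SO"
  using J
proof (induction J rule: finite_induct)
  case empty then show ?case by simp
next
  case (insert x F)
  show ?case
  proof (cases "F = {}")
    case True then show ?thesis by simp
  next
    case False
    then obtain m0 where m0: "m0 \<in> F" "\<forall>j\<in>F. j \<noteq> m0 \<longrightarrow> (j, m0) \<in> SO"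
      using insert by auto
    have xm: "x \<noteq> m0" using insert m0 by auto
    have "(m0, x) \<in> SO \<or> (x, m0) \<in> SO" using tot[OF _ _ xm] insert m0 by auto
    then show ?thesis
    proof
      assume h: "(m0, x) \<in> SO"
      have "\<forall>j\<in>insert x F. j \<noteq> x \<longrightarrow> (j, x) \<in> SO"
      proof (intro ballI impI)
        fix j assume "j \<in> insert x F" "j \<noteq> x"
        then have "j \<in> F" by simp
        then show "(j, x) \<in> SO"
          using m0 h tr by (cases "j = m0") (auto dest: transD)
      qed
      then show ?thesis by blast
    next
      assume h: "(x, m0) \<in> SO"
      then show ?thesis using m0 by auto
    qed
  qed
qed

context VS begin

lemma indep_wo:
  fixes f :: "'i \<Rightarrow> 'b"
  assumes tr: "trans SO" and irr: "\<And>s. (s, s) \<notin> SO"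
    and tot: "\<And>s s'. s \<in> I \<Longrightarrow> s' \<in> I \<Longrightarrow> s \<noteq> s' \<Longrightarrow> (s, s') \<in> SO \<or> (s', s) \<in> SO"
    and new: "\<And>s. s \<in> I \<Longrightarrow> f s \<notin> span (f ` {s'\<in>I. (s', s) \<in> SO})"
  shows "inj_on f I" and "independent (f ` I)"
proof -
  show "inj_on f I"
  proof (rule inj_onI)
    fix s s' assume ss: "s \<in> I" "s' \<in> I" "f s = f s'"
    show "s = s'"
    proof (rule ccontr)
      assume ne: "s \<noteq> s'"
      have "(s, s') \<in> SO \<or> (s', s) \<in> SO" using tot[OF ss(1,2) ne] .
      then show False
      proof
        assume "(s, s') \<in> SO"
        then have "f s \<in> span (f ` {t\<in>I. (t, s') \<in> SO})" using ss(1) by (auto intro: span_base)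
        then show False using new[OF ss(2)] ss(3) by simp
      next
        assume "(s', s) \<in> SO"
        then have "f s' \<in> span (f ` {t\<in>I. (t, s) \<in> SO})" using ss(2) by (auto intro: span_base)
        then show False using new[OF ss(1)] ss(3) by simp
      qed
    qed
  qed
  have fin: "independent (f ` J)" if "finite J" "J \<subseteq> I" for J
    using that(1) that(2)
  proof (induction J rule: finite_remove_induct)
    case empty then show ?case using independent_empty by simp
  next
    case (remove A)
    have AI: "A \<subseteq> I" using remove.prems remove.hyps(3) by auto
    obtain m where m: "m \<in> A" "\<forall>j\<in>A. j \<noteq> m \<longrightarrow> (j, m) \<in> SO"
      using rel_max[OF tr irr tot remove.hyps(1,2) AI] by blast
    have ind: "independent (f ` (A - {m}))" using remove.IH[OF m(1)] remove.prems by auto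
    have sub: "A - {m} \<subseteq> {s'\<in>I. (s', m) \<in> SO}" using m AI by auto
    have "span (f ` (A - {m})) \<subseteq> span (f ` {s'\<in>I. (s', m) \<in> SO})"
      by (rule span_mono) (use sub in blast)
    then have nm: "f m \<notin> span (f ` (A - {m}))" using new[of m] m(1) AI by blast
    have eq: "f ` A = insert (f m) (f ` (A - {m}))" using m(1) by blast
    show ?case unfolding eq by (rule independent_insertI[OF nm ind])
  qed
  show "independent (f ` I)"
  proof
    assume "dependent (f ` I)"
    then obtain t uu where t: "finite t" "t \<subseteq> f ` I" "(\<Sum>v\<in>t. uu v *s v) = 0" "\<exists>v\<in>t. uu v \<noteq> 0"
      unfolding dependent_explicit by blast
    have dt: "dependent t" unfolding dependent_explicit using t by blast
    obtain J where J: "J \<subseteq> I" "finite J" "t = f ` J" using finite_subset_image[OF t(1) t(2)] by blast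
    show False using fin[OF J(2) J(1)] dt J(3) by simp
  qed
qed

end

locale Constr = Setup scale u E for scale :: "'a::field \<Rightarrow> 'b::ab_group_add \<Rightarrow> 'b" (infixr \<open>*s\<close> 75)
  and u E +
  fixes a :: 'a and Q :: "(('b \<times> nat) \<times> ('b \<times> nat)) set"
  assumes Qwf: "wf Q" and Qtrans: "trans Q"
    and Qtotal: "\<And>c c' m m'. c \<in> E \<Longrightarrow> c' \<in> E \<Longrightarrow> (c, m) \<noteq> (c', m') \<Longrightarrow>
        ((c, m), (c', m')) \<in> Q \<or> ((c', m'), (c, m)) \<in> Q"
    and Qsub: "Q \<subseteq> (E \<times> UNIV) \<times> (E \<times> UNIV)"
    and Qsuc: "\<And>c n. c \<in> E \<Longrightarrow> ((c, n), (c, Suc n)) \<in> Q"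
    and Qsmall: "\<And>s. {t. (t, s) \<in> Q} \<times> (UNIV :: bool set) \<prec> E"
begin

definition Cre :: "('b \<times> nat \<Rightarrow> ('b \<times> bool) list) \<Rightarrow> 'b \<times> nat \<Rightarrow> 'b set" where
  "Cre f s = (\<Union>t\<in>{t. (t, s) \<in> Q}. fst ` set (f t))"

definition pick :: "'b set \<Rightarrow> 'b" where
  "pick T = (SOME x. x \<notin> span T \<and> u x \<notin> span (insert x T))"

definition stepY :: "'b \<Rightarrow> 'b set \<Rightarrow> ('b \<times> bool) list" where
  "stepY g T = (if u g - a *s g \<notin> span T then [(u g - a *s g, False)]
      else [(pick T, True), (u (pick T), False)])"

definition G :: "('b \<times> nat \<Rightarrow> ('b \<times> bool) list) \<Rightarrow> 'b \<times> nat \<Rightarrow> ('b \<times> bool) list" where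
  "G f s = (if fst s \<notin> E then [] else
     if snd s = 0 then (if fst s \<in> span (Cre f s) then [] else [(fst s, False)])
     else (if f (fst s, snd s - 1) = [] then []
           else stepY (fst (last (f (fst s, snd s - 1)))) (Cre f s)))"

definition out where "out = wfrec Q G"

lemma Cre_cut: "Cre (cut f Q s) s = Cre f s"
  unfolding Cre_def by (auto simp: cut_apply)

lemma out_eq: "out s = G out s"
proof -
  have "out s = G (cut out Q s) s" unfolding out_def by (rule wfrec[OF Qwf])
  also have "\<dots> = G out s"
  proof (cases "fst s \<in> E \<and> snd s \<noteq> 0")
    case True
    then have "((fst s, snd s - 1), s) \<in> Q" using Qsuc[of "fst s" "snd s - 1"] by (cases s) auto
    then show ?thesis unfolding G_def Cre_cut by (simp add: cut_apply)
  next
    case False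
    then show ?thesis unfolding G_def Cre_cut by auto
  qed
  finally show ?thesis .
qed

lemma out_0: "c \<in> E \<Longrightarrow> out (c, 0) = (if c \<in> span (Cre out (c, 0)) then [] else [(c, False)])"
  by (subst out_eq) (simp add: G_def)

lemma out_Suc: "c \<in> E \<Longrightarrow> out (c, Suc m) = (if out (c, m) = [] then [] else stepY (fst (last (out (c, m)))) (Cre out (c, Suc m)))"
  by (subst out_eq) (simp add: G_def)

lemma out_notE: "c \<notin> E \<Longrightarrow> out (c, m) = []"
  by (subst out_eq) (simp add: G_def)

lemma out_shape: "out s = [] \<or> (\<exists>y. out s = [(y, False)]) \<or> (\<exists>x. out s = [(x, True), (u x, False)])"
proof -
  obtain c m where s: "s = (c, m)" by (cases s)
  show ?thesis
  proof (cases "c \<in> E")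
    case False then show ?thesis using s out_notE by simp
  next
    case True
    show ?thesis
    proof (cases m)
      case 0 then show ?thesis using s out_0[OF True] by simp
    next
      case (Suc k) then show ?thesis using s out_Suc[OF True, of k] by (simp add: stepY_def)
    qed
  qed
qed

lemma Cre_small: "Cre out s \<prec> E"
proof -
  have "Cre out s \<subseteq> (\<lambda>(t, b). fst (out t ! (if b then 1 else 0))) ` ({t. (t, s) \<in> Q} \<times> UNIV)"
  proof
    fix y assume "y \<in> Cre out s"
    then obtain t where t: "(t, s) \<in> Q" "y \<in> fst ` set (out t)" unfolding Cre_def by auto
    then obtain i where i: "i < length (out t)" "y = fst (out t ! i)" by (auto simp: in_set_conv_nth)
    have "i = 0 \<or> i = 1" using i(1) out_shape[of t] by auto
    then show "y \<in> (\<lambda>(t, b). fst (out t ! (if b then 1 else 0))) ` ({t. (t, s) \<in> Q} \<times> UNIV)"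
      using t(1) i(2) by (auto intro!: image_eqI[of _ _ "(t, i = 1)"])
  qed
  then have "Cre out s \<lesssim> {t. (t, s) \<in> Q} \<times> (UNIV :: bool set)" by (rule subset_image_lepoll)
  then show ?thesis using Qsmall by (rule lesspoll_trans1)
qed

lemma pick_spec: "A \<prec> E \<Longrightarrow> pick A \<notin> span A \<and> u (pick A) \<notin> span (insert (pick A) A)"
  unfolding pick_def by (rule someI_ex[OF lemmaA])


lemma stepY_facts:
  assumes T: "T \<prec> E"
  shows "stepY g T \<noteq> []"
    and "fst (hd (stepY g T)) \<notin> span T"
    and "length (stepY g T) = 1 \<Longrightarrow> stepY g T = [(u g - a *s g, False)]"
    and "length (stepY g T) = 2 \<Longrightarrow> stepY g T = [(pick T, True), (u (pick T), False)] \<and> u g - a *s g \<in> span T"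
    and "length (stepY g T) = 2 \<Longrightarrow> u (pick T) \<notin> span (insert (pick T) T)"
    and "length (stepY g T) \<le> 2"
  using pick_spec[OF T] unfolding stepY_def by (auto split: if_splits)

lemma out_cases:
  assumes "out s \<noteq> []"
  shows "fst s \<in> E \<and> ((snd s = 0 \<and> out s = [(fst s, False)] \<and> fst s \<notin> span (Cre out s)) \<or>
    (\<exists>k. snd s = Suc k \<and> out (fst s, k) \<noteq> [] \<and> out s = stepY (fst (last (out (fst s, k)))) (Cre out s)))"
proof -
  obtain c m where s: "s = (c, m)" by (cases s)
  have cE: "c \<in> E" using assms s out_notE by (cases "c \<in> E") auto
  show ?thesis
  proof (cases m)
    case 0 then show ?thesis using assms s cE out_0[OF cE] by (auto split: if_splits)
  next
    case (Suc k) then show ?thesis using assms s cE out_Suc[OF cE, of k] by (auto split: if_splits)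
  qed
qed

lemma out_chain: "c \<in> E \<Longrightarrow> out (c, m) \<noteq> [] \<Longrightarrow> out (c, Suc m) = stepY (fst (last (out (c, m)))) (Cre out (c, Suc m))"
  using out_Suc by simp

lemma out_chain_ne: "c \<in> E \<Longrightarrow> out (c, m) \<noteq> [] \<Longrightarrow> out (c, Suc m) \<noteq> []"
  using out_chain stepY_facts(1)[OF Cre_small] by simp

definition "Sl = {(s, i). i < length (out s)}"
definition "vec \<sigma> = fst (out (fst \<sigma>) ! snd \<sigma>)"
definition "lab \<sigma> = snd (out (fst \<sigma>) ! snd \<sigma>)"
definition "SO = Q <*lex*> less_than"
definition "nxt s = (fst s, Suc (snd s))"
definition succS :: "('b \<times> nat) \<times> nat \<Rightarrow> ('b \<times> nat) \<times> nat" where "succS \<sigma> = (if lab \<sigma> then (fst \<sigma>, 1) else (nxt (fst \<sigma>), 0))"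

lemma len_le2: "length (out s) \<le> 2"
  using out_shape[of s] by auto

lemma len2: "length (out s) = 2 \<Longrightarrow> out s = [(vec (s, 0), True), (u (vec (s, 0)), False)]"
  using out_shape[of s] by (auto simp: vec_def)

lemma len1: "length (out s) = 1 \<Longrightarrow> out s = [(vec (s, 0), False)]"
  using out_shape[of s] by (auto simp: vec_def)

lemma Sl_lab: "\<sigma> \<in> Sl \<Longrightarrow> lab \<sigma> \<longleftrightarrow> snd \<sigma> = 0 \<and> length (out (fst \<sigma>)) = 2"
  using out_shape[of "fst \<sigma>"] by (cases \<sigma>) (auto simp: Sl_def lab_def less_Suc_eq)

lemma Sl_last: "\<sigma> \<in> Sl \<Longrightarrow> \<not> lab \<sigma> \<Longrightarrow> snd \<sigma> = length (out (fst \<sigma>)) - 1 \<and> vec \<sigma> = fst (last (out (fst \<sigma>)))"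
  using out_shape[of "fst \<sigma>"] by (cases \<sigma>) (auto simp: Sl_def lab_def vec_def less_Suc_eq)

lemma Sl_ne: "\<sigma> \<in> Sl \<Longrightarrow> out (fst \<sigma>) \<noteq> []"
  by (cases \<sigma>) (auto simp: Sl_def)

lemma Sl_E: "\<sigma> \<in> Sl \<Longrightarrow> fst (fst \<sigma>) \<in> E"
  using out_cases[OF Sl_ne] by blast

lemma SO_wf: "wf SO" unfolding SO_def by (intro wf_lex_prod Qwf wf_less_than)
lemma SO_trans: "trans SO" unfolding SO_def by (intro trans_lex_prod Qtrans trans_less_than)
lemma SO_irr: "(\<sigma>, \<sigma>) \<notin> SO" using SO_wf by (auto dest: wf_not_refl)
lemma SO_total: "\<sigma> \<in> Sl \<Longrightarrow> \<sigma>' \<in> Sl \<Longrightarrow> \<sigma> \<noteq> \<sigma>' \<Longrightarrow> (\<sigma>, \<sigma>') \<in> SO \<or> (\<sigma>', \<sigma>) \<in> SO"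
proof -
  assume a: "\<sigma> \<in> Sl" "\<sigma>' \<in> Sl" "\<sigma> \<noteq> \<sigma>'"
  obtain c m i c' m' i' where s: "\<sigma> = ((c, m), i)" "\<sigma>' = ((c', m'), i')" by (cases \<sigma>, cases \<sigma>') auto
  have E: "c \<in> E" "c' \<in> E" using Sl_E[OF a(1)] Sl_E[OF a(2)] s by auto
  show ?thesis
  proof (cases "(c, m) = (c', m')")
    case True then show ?thesis using a s by (auto simp: SO_def)
  next
    case False then show ?thesis using Qtotal[OF E False] s by (auto simp: SO_def)
  qed
qed

lemma SO_iff: "((s', i'), (s, i)) \<in> SO \<longleftrightarrow> (s', s) \<in> Q \<or> (s' = s \<and> i' < i)"
  by (simp add: SO_def)

lemma vec_pre: "vec ` {\<sigma>'\<in>Sl. (fst \<sigma>', s) \<in> Q} = Cre out s"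
proof
  show "vec ` {\<sigma>'\<in>Sl. (fst \<sigma>', s) \<in> Q} \<subseteq> Cre out s"
    by (auto simp: Cre_def Sl_def vec_def)
  show "Cre out s \<subseteq> vec ` {\<sigma>'\<in>Sl. (fst \<sigma>', s) \<in> Q}"
  proof
    fix y assume "y \<in> Cre out s"
    then obtain t where t: "(t, s) \<in> Q" "y \<in> fst ` set (out t)" unfolding Cre_def by auto
    then obtain i where i: "i < length (out t)" "y = fst (out t ! i)" by (auto simp: in_set_conv_nth)
    then show "y \<in> vec ` {\<sigma>'\<in>Sl. (fst \<sigma>', s) \<in> Q}"
      using t(1) by (auto simp: Sl_def vec_def intro!: image_eqI[of _ _ "(t, i)"])
  qed
qed

lemma below0: "{\<sigma>'\<in>Sl. (\<sigma>', (s, 0)) \<in> SO} = {\<sigma>'\<in>Sl. (fst \<sigma>', s) \<in> Q}"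
  by (auto simp: SO_def)

lemma below1: "(s, 0) \<in> Sl \<Longrightarrow> {\<sigma>'\<in>Sl. (\<sigma>', (s, 1)) \<in> SO} = insert (s, 0) {\<sigma>'\<in>Sl. (fst \<sigma>', s) \<in> Q}"
  by (auto simp: SO_def)

lemma new_vec: "\<sigma> \<in> Sl \<Longrightarrow> vec \<sigma> \<notin> span (vec ` {\<sigma>'\<in>Sl. (\<sigma>', \<sigma>) \<in> SO})"
proof -
  assume sl: "\<sigma> \<in> Sl"
  obtain s i where si: "\<sigma> = (s, i)" by (cases \<sigma>)
  have ne: "out s \<noteq> []" using sl si by (auto simp: Sl_def)
  note oc = out_cases[OF ne]
  have T: "Cre out s \<prec> E" by (rule Cre_small)
  have i01: "i = 0 \<or> i = 1" using sl si len_le2[of s] by (auto simp: Sl_def)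
  then show ?thesis
  proof
    assume i0: "i = 0"
    have "vec (s, 0) \<notin> span (Cre out s)"
    proof (cases "snd s = 0")
      case True then show ?thesis using oc by (auto simp: vec_def)
    next
      case False
      then obtain k where "out s = stepY (fst (last (out (fst s, k)))) (Cre out s)" using oc by auto
      then show ?thesis using stepY_facts(1,2)[OF T] by (auto simp: vec_def hd_conv_nth)
    qed
    then show ?thesis using si i0 below0 vec_pre by simp
  next
    assume i1: "i = 1"
    then have l2: "length (out s) = 2" using sl si len_le2[of s] by (auto simp: Sl_def)
    have "snd s \<noteq> 0" using oc l2 by auto
    then obtain k where ok: "out s = stepY (fst (last (out (fst s, k)))) (Cre out s)" using oc by auto
    then have l2': "length (stepY (fst (last (out (fst s, k)))) (Cre out s)) = 2" using l2 by simp
    note f = stepY_facts(4,5)[OF T l2']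
    have v0: "vec (s, 0) = pick (Cre out s)" and v1: "vec (s, 1) = u (pick (Cre out s))"
      using f(1) ok by (auto simp: vec_def)
    have s0: "(s, 0) \<in> Sl" using l2 by (auto simp: Sl_def)
    have "vec ` {\<sigma>'\<in>Sl. (\<sigma>', (s, 1)) \<in> SO} = insert (vec (s, 0)) (Cre out s)"
      using below1[OF s0] vec_pre by simp
    then show ?thesis using si i1 f(2) v0 v1 by simp
  qed
qed


definition "wv \<sigma> = (if lab \<sigma> then u (vec \<sigma>) else u (vec \<sigma>) - a *s vec \<sigma> +
   (if length (out (nxt (fst \<sigma>))) = 2 then vec (nxt (fst \<sigma>), 0) else 0))"

lemma vec_inj: "inj_on vec Sl"
  by (rule indep_wo(1)[OF SO_trans SO_irr SO_total new_vec])

lemma D_indep: "independent (vec ` Sl)"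
  by (rule indep_wo(2)[OF SO_trans SO_irr SO_total new_vec])

lemma D_span: "span (vec ` Sl) = UNIV"
proof -
  have "E \<subseteq> span (vec ` Sl)"
  proof
    fix c assume cE: "c \<in> E"
    show "c \<in> span (vec ` Sl)"
    proof (cases "c \<in> span (Cre out (c, 0))")
      case True
      have "Cre out (c, 0) \<subseteq> vec ` Sl" using vec_pre[of "(c, 0)"] by auto
      then have "span (Cre out (c, 0)) \<subseteq> span (vec ` Sl)" by (rule span_mono)
      then show ?thesis using True by auto
    next
      case False
      then have "out (c, 0) = [(c, False)]" using out_0[OF cE] by simp
      then have "((c, 0), 0) \<in> Sl" "vec ((c, 0), 0) = c" by (auto simp: Sl_def vec_def)
      then show ?thesis by (metis image_eqI span_base)
    qed
  qed
  then have "span E \<subseteq> span (vec ` Sl)" using span_minimal subspace_span by blast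
  then show ?thesis using spanE by auto
qed

lemma succS_facts:
  assumes sl: "\<sigma> \<in> Sl"
  shows "succS \<sigma> \<in> Sl" and "snd (fst (succS \<sigma>)) \<noteq> 0" and "(\<sigma>, succS \<sigma>) \<in> SO"
    and "wv \<sigma> - vec (succS \<sigma>) \<in> span (vec ` {\<sigma>'\<in>Sl. (\<sigma>', succS \<sigma>) \<in> SO})"
proof -
  obtain s i where si: "\<sigma> = (s, i)" by (cases \<sigma>)
  obtain c m where s: "s = (c, m)" by (cases s)
  have cE: "c \<in> E" using Sl_E[OF sl] si s by simp
  have ne: "out s \<noteq> []" using Sl_ne[OF sl] si by simp
  have "succS \<sigma> \<in> Sl \<and> snd (fst (succS \<sigma>)) \<noteq> 0 \<and> (\<sigma>, succS \<sigma>) \<in> SO \<and>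
    wv \<sigma> - vec (succS \<sigma>) \<in> span (vec ` {\<sigma>'\<in>Sl. (\<sigma>', succS \<sigma>) \<in> SO})"
  proof (cases "lab \<sigma>")
    case True
    then have i0: "i = 0" and l2: "length (out s) = 2" using Sl_lab[OF sl] si by auto
    have m0: "m \<noteq> 0" using l2 out_cases[OF ne] s by auto
    have ss: "succS \<sigma> = (s, 1)" using True si by (simp add: succS_def)
    have o: "out s = [(vec (s, 0), True), (u (vec (s, 0)), False)]" by (rule len2[OF l2])
    have "vec (s, 1) = fst (out s ! 1)" by (simp add: vec_def)
    also have "\<dots> = u (vec (s, 0))" by (subst o) simp
    finally have "wv \<sigma> = vec (s, 1)" using True si i0 by (simp add: wv_def)
    then show ?thesis using ss l2 s m0 si i0 by (auto simp: Sl_def SO_def span_zero)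
  next
    case False
    have il: "i = length (out s) - 1" and g: "vec \<sigma> = fst (last (out s))"
      using Sl_last[OF sl False] si by auto
    let ?s' = "(c, Suc m)"
    have nx: "nxt s = ?s'" using s by (simp add: nxt_def)
    have nxs: "nxt (fst \<sigma>) = ?s'" using si nx by simp
    have ss: "succS \<sigma> = (?s', 0)" using False si nx by (simp add: succS_def)
    have oc: "out ?s' = stepY (vec \<sigma>) (Cre out ?s')" using out_chain[OF cE] ne s g by simp
    have ne': "out ?s' \<noteq> []" using out_chain_ne[OF cE] ne s by simp
    have inSl: "(?s', 0) \<in> Sl" using ne' by (auto simp: Sl_def)
    have inSO: "(\<sigma>, (?s', 0)) \<in> SO" using si s Qsuc[OF cE] by (simp add: SO_def)
    have T: "Cre out ?s' \<prec> E" by (rule Cre_small)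
    have l12: "length (out ?s') = 1 \<or> length (out ?s') = 2" proof -
      have "length (out ?s') \<noteq> 0" using ne' by simp
      then show ?thesis using len_le2[of ?s'] by linarith
    qed
    have "wv \<sigma> - vec (?s', 0) \<in> span (Cre out ?s')"
      using l12
    proof
      assume l1: "length (out ?s') = 1"
      then have o1: "out ?s' = [(u (vec \<sigma>) - a *s vec \<sigma>, False)]" using stepY_facts(3)[OF T] oc by simp
      have "vec (?s', 0) = fst (out ?s' ! 0)" by (simp add: vec_def)
      also have "\<dots> = u (vec \<sigma>) - a *s vec \<sigma>" by (subst o1) simp
      finally have v0: "vec (?s', 0) = u (vec \<sigma>) - a *s vec \<sigma>" .
      have "wv \<sigma> = u (vec \<sigma>) - a *s vec \<sigma>" using False l1 nxs by (simp add: wv_def)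
      then show ?thesis using v0 by (simp add: span_zero)
    next
      assume l2: "length (out ?s') = 2"
      then have "u (vec \<sigma>) - a *s vec \<sigma> \<in> span (Cre out ?s')" using stepY_facts(4)[OF T] oc by simp
      then show ?thesis using False l2 nxs by (simp add: wv_def)
    qed
    moreover have "vec ` {\<sigma>'\<in>Sl. (\<sigma>', (?s', 0)) \<in> SO} = Cre out ?s'"
      using below0 vec_pre by simp
    ultimately show ?thesis using ss inSl inSO by simp
  qed
  then show "succS \<sigma> \<in> Sl" and "snd (fst (succS \<sigma>)) \<noteq> 0" and "(\<sigma>, succS \<sigma>) \<in> SO"
    and "wv \<sigma> - vec (succS \<sigma>) \<in> span (vec ` {\<sigma>'\<in>Sl. (\<sigma>', succS \<sigma>) \<in> SO})" by auto
qed

lemma succS_inj: "inj_on succS Sl"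
proof (rule inj_onI)
  fix x y assume xy: "x \<in> Sl" "y \<in> Sl" "succS x = succS y"
  obtain s i t j where st: "x = (s, i)" "y = (t, j)" by (cases x, cases y) auto
  show "x = y"
  proof (cases "lab x"; cases "lab y")
    assume "lab x" "lab y"
    then show ?thesis using xy st Sl_lab[OF xy(1)] Sl_lab[OF xy(2)] by (simp add: succS_def)
  next
    assume "lab x" "\<not> lab y"
    then have "(s, 1::nat) = (nxt t, 0)" using xy st by (simp add: succS_def)
    then show ?thesis by simp
  next
    assume "\<not> lab x" "lab y"
    then have "(nxt s, 0) = (t, 1::nat)" using xy st by (simp add: succS_def)
    then show ?thesis by simp
  next
    assume nl: "\<not> lab x" "\<not> lab y"
    then have "nxt s = nxt t" using xy st by (simp add: succS_def)
    then have "s = t" by (cases s, cases t) (simp add: nxt_def)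
    then show ?thesis using Sl_last[OF xy(1) nl(1)] Sl_last[OF xy(2) nl(2)] st by simp
  qed
qed

lemma succS_onto:
  assumes "\<tau> \<in> Sl" "snd (fst \<tau>) \<noteq> 0"
  shows "\<exists>\<sigma>\<in>Sl. succS \<sigma> = \<tau>"
proof -
  obtain s j where sj: "\<tau> = (s, j)" by (cases \<tau>)
  have ne: "out s \<noteq> []" using Sl_ne[OF assms(1)] sj by simp
  have j01: "j = 0 \<or> j = 1" using assms(1) sj len_le2[of s] by (auto simp: Sl_def)
  then show ?thesis
  proof
    assume j1: "j = 1"
    then have l2: "length (out s) = 2" using assms(1) sj len_le2[of s] by (auto simp: Sl_def)
    have "(s, 0) \<in> Sl" "lab (s, 0)" using l2 Sl_lab[of "(s, 0)"] by (auto simp: Sl_def)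
    then show ?thesis using sj j1 by (auto simp: succS_def intro!: bexI[of _ "(s, 0)"])
  next
    assume j0: "j = 0"
    obtain c k where ck: "s = (c, Suc k)" "out (c, k) \<noteq> []"
      using out_cases[OF ne] assms(2) sj by (cases s) auto
    let ?\<sigma> = "((c, k), length (out (c, k)) - 1)"
    have sl: "?\<sigma> \<in> Sl" using ck(2) by (auto simp: Sl_def)
    have nl: "\<not> lab ?\<sigma>" using Sl_lab[OF sl] len_le2[of "(c, k)"] ck(2) by (cases "out (c, k)") auto
    have "succS ?\<sigma> = \<tau>" using nl sj j0 ck(1) by (simp add: succS_def nxt_def)
    then show ?thesis using sl by blast
  qed
qed


theorem constr_main:
  "\<exists>v. Vector_Spaces.linear scale scale v \<and> (\<forall>x. v (v x) = a *s v x) \<and> elementary scale (\<lambda>x. u x - v x)"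
proof -
  interpret PP: vector_space_pair scale scale by (simp add: vector_space_pair_def vector_space_axioms)
  define D where "D = vec ` Sl"
  define slot where "slot d = inv_into Sl vec d" for d
  have slot_vec: "slot (vec \<sigma>) = \<sigma>" if "\<sigma> \<in> Sl" for \<sigma>
    unfolding slot_def by (rule inv_into_f_f[OF vec_inj that])
  have slot_in: "slot d \<in> Sl" "vec (slot d) = d" if "d \<in> D" for d
    using that unfolding slot_def D_def by (auto intro: inv_into_into f_inv_into_f)
  have Dind: "independent D" unfolding D_def by (rule D_indep)
  have Dsp: "span D = UNIV" unfolding D_def by (rule D_span)
  define w where "w = PP.construct D (\<lambda>d. wv (slot d))"
  have lin_w: "Vector_Spaces.linear scale scale w" unfolding w_def by (rule PP.linear_construct[OF Dind])
  have w_D: "w d = wv (slot d)" if "d \<in> D" for d unfolding w_def by (rule PP.construct_basis[OF Dind that])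
  define R where "R = {(vec \<sigma>, vec \<sigma>') | \<sigma> \<sigma>'. \<sigma> \<in> Sl \<and> \<sigma>' \<in> Sl \<and> (\<sigma>, \<sigma>') \<in> SO}"
  have R_mem: "(vec \<sigma>, vec \<sigma>') \<in> R" if "\<sigma> \<in> Sl" "\<sigma>' \<in> Sl" "(\<sigma>, \<sigma>') \<in> SO" for \<sigma> \<sigma>'
    unfolding R_def by (rule CollectI, rule exI[of _ \<sigma>], rule exI[of _ \<sigma>']) (simp add: that)
  have "R \<subseteq> inv_image SO slot" unfolding R_def by (auto simp: slot_vec)
  then have wfR: "wf R" using wf_subset[OF wf_inv_image[OF SO_wf]] by blast
  define B where "B = vec ` {\<sigma>\<in>Sl. snd (fst \<sigma>) = 0}"
  have BD: "B \<subseteq> D" unfolding B_def D_def by auto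
  define succ where "succ d = vec (succS (slot d))" for d
  have succ_in: "succ d \<in> D - B" if "d \<in> D" for d
  proof -
    let ?\<sigma> = "slot d"
    have sl: "?\<sigma> \<in> Sl" using slot_in[OF that] by simp
    note f = succS_facts[OF sl]
    have "vec (succS ?\<sigma>) \<notin> B"
    proof
      assume "vec (succS ?\<sigma>) \<in> B"
      then obtain \<tau> where "\<tau> \<in> Sl" "snd (fst \<tau>) = 0" "vec (succS ?\<sigma>) = vec \<tau>" unfolding B_def by auto
      then have "succS ?\<sigma> = \<tau>" using inj_onD[OF vec_inj \<open>vec (succS ?\<sigma>) = vec \<tau>\<close> f(1) \<open>\<tau> \<in> Sl\<close>] by simp
      then show False using f(2) \<open>snd (fst \<tau>) = 0\<close> by simp
    qed
    then show ?thesis using f(1) unfolding succ_def D_def by auto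
  qed
  have succ_R: "(d, succ d) \<in> R" if "d \<in> D" for d
  proof -
    have "(vec (slot d), vec (succS (slot d))) \<in> R"
      by (rule R_mem[OF slot_in(1)[OF that] succS_facts(1,3)[OF slot_in(1)[OF that]]])
    then show ?thesis using slot_in(2)[OF that] unfolding succ_def by simp
  qed
  have succ_inj: "inj_on succ D"
  proof (rule inj_onI)
    fix d1 d2 assume d: "d1 \<in> D" "d2 \<in> D" "succ d1 = succ d2"
    have "succS (slot d1) = succS (slot d2)"
      using inj_onD[OF vec_inj _ succS_facts(1)[OF slot_in(1)[OF d(1)]] succS_facts(1)[OF slot_in(1)[OF d(2)]]] d(3)
      unfolding succ_def by simp
    then have "slot d1 = slot d2" using inj_onD[OF succS_inj _ slot_in(1)[OF d(1)] slot_in(1)[OF d(2)]] by simp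
    then show "d1 = d2" using slot_in(2)[OF d(1)] slot_in(2)[OF d(2)] by metis
  qed
  have succ_onto: "\<exists>d\<in>D. succ d = h" if "h \<in> D - B" for h
  proof -
    have hD: "h \<in> D" using that by simp
    let ?\<tau> = "slot h"
    have tl: "?\<tau> \<in> Sl" and vt: "vec ?\<tau> = h" using slot_in[OF hD] by auto
    have "snd (fst ?\<tau>) \<noteq> 0"
    proof
      assume "snd (fst ?\<tau>) = 0"
      then have "h \<in> B" using tl vt unfolding B_def by (metis (mono_tags, lifting) image_eqI mem_Collect_eq)
      then show False using that by simp
    qed
    then obtain \<sigma> where \<sigma>: "\<sigma> \<in> Sl" "succS \<sigma> = ?\<tau>" using succS_onto[OF tl] by blast
    have "succ (vec \<sigma>) = h" using \<sigma> vt slot_vec[OF \<sigma>(1)] unfolding succ_def by simp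
    moreover have "vec \<sigma> \<in> D" using \<sigma>(1) unfolding D_def by simp
    ultimately show ?thesis by blast
  qed
  have low: "w d - succ d \<in> span {d'\<in>D. (d', succ d) \<in> R}" if "d \<in> D" for d
  proof -
    let ?\<sigma> = "slot d"
    have sl: "?\<sigma> \<in> Sl" using slot_in[OF that] by simp
    have "vec ` {\<sigma>'\<in>Sl. (\<sigma>', succS ?\<sigma>) \<in> SO} \<subseteq> {d'\<in>D. (d', succ d) \<in> R}"
    proof
      fix y assume "y \<in> vec ` {\<sigma>'\<in>Sl. (\<sigma>', succS ?\<sigma>) \<in> SO}"
      then obtain \<sigma>' where s': "\<sigma>' \<in> Sl" "(\<sigma>', succS ?\<sigma>) \<in> SO" "y = vec \<sigma>'" by blast
      have "(vec \<sigma>', vec (succS ?\<sigma>)) \<in> R" by (rule R_mem[OF s'(1) succS_facts(1)[OF sl] s'(2)])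
      moreover have "y \<in> D" using s' unfolding D_def by simp
      ultimately show "y \<in> {d'\<in>D. (d', succ d) \<in> R}" using s'(3) unfolding succ_def by simp
    qed
    then have "span (vec ` {\<sigma>'\<in>Sl. (\<sigma>', succS ?\<sigma>) \<in> SO}) \<subseteq> span {d'\<in>D. (d', succ d) \<in> R}"
      by (rule span_mono)
    moreover have "w d - succ d = wv ?\<sigma> - vec (succS ?\<sigma>)" using w_D[OF that] unfolding succ_def by simp
    ultimately show ?thesis using succS_facts(4)[OF sl] by auto
  qed
  have elem: "elementary scale w"
    by (rule free_criterion[OF Dind Dsp lin_w wfR BD succ_in succ_R succ_inj succ_onto low])
  define v where "v x = u x - w x" for x
  have lin_v: "Vector_Spaces.linear scale scale v" unfolding v_def[abs_def]
    by (rule PP.linear_compose_sub[OF lin_u lin_w])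
  interpret LV: Vector_Spaces.linear scale scale v by (rule lin_v)
  have vlab: "v (vec \<sigma>) = 0" if "\<sigma> \<in> Sl" "lab \<sigma>" for \<sigma>
  proof -
    have "vec \<sigma> \<in> D" using that unfolding D_def by simp
    then have "w (vec \<sigma>) = wv \<sigma>" using w_D slot_vec[OF that(1)] by simp
    then show ?thesis using that(2) by (simp add: v_def wv_def)
  qed
  have vD: "v (v d) = a *s v d" if "d \<in> D" for d
  proof -
    let ?\<sigma> = "slot d"
    have sl: "?\<sigma> \<in> Sl" and vs: "vec ?\<sigma> = d" using slot_in[OF that] by auto
    show ?thesis
    proof (cases "lab ?\<sigma>")
      case True then show ?thesis using vlab[OF sl] vs by simp
    next
      case False
      define \<xi> where "\<xi> = (if length (out (nxt (fst ?\<sigma>))) = 2 then vec (nxt (fst ?\<sigma>), 0) else 0)"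
      have wd: "w d = u d - a *s d + \<xi>" using w_D[OF that] False vs unfolding wv_def \<xi>_def by simp
      have vd: "v d = a *s d - \<xi>" unfolding v_def wd by (simp add: algebra_simps)
      have vxi: "v \<xi> = 0"
      proof (cases "length (out (nxt (fst ?\<sigma>))) = 2")
        case True
        then have "(nxt (fst ?\<sigma>), 0) \<in> Sl" "lab (nxt (fst ?\<sigma>), 0)"
          using Sl_lab[of "(nxt (fst ?\<sigma>), 0)"] by (auto simp: Sl_def)
        then show ?thesis using vlab True unfolding \<xi>_def by simp
      next
        case False then show ?thesis unfolding \<xi>_def by simp
      qed
      have "v (v d) = v (a *s d - \<xi>)" using vd by simp
      also have "\<dots> = a *s v d - v \<xi>" by (simp add: LV.diff LV.scale)
      finally have "v (v d) = a *s v d - v \<xi>" .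
      then show ?thesis using vxi by simp
    qed
  qed
  have vv: "v (v x) = a *s v x" for x
  proof -
    have l1: "Vector_Spaces.linear scale scale (v \<circ> v)" by (rule Vector_Spaces.linear_compose[OF lin_v lin_v])
    have l2: "Vector_Spaces.linear scale scale (\<lambda>x. a *s v x)" by (rule PP.linear_compose_scale_right[OF lin_v])
    have "(v \<circ> v) x = a *s v x"
      by (rule PP.linear_eq_on[OF l1 l2, of x D]) (auto simp: Dsp vD)
    then show ?thesis by simp
  qed
  have "(\<lambda>x. u x - v x) = w" by (rule ext) (simp add: v_def)
  then show ?thesis using lin_v vv elem by auto
qed

end

unbundle cardinal_syntax

lemma lesspoll_of_card: "|A| <o |B| \<Longrightarrow> A \<prec> B"
proof -
  assume h: "|A| <o |B|"
  have "|A| \<le>o |B|" by (rule ordLess_imp_ordLeq[OF h])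
  then have "A \<lesssim> B" unfolding lepoll_def by (rule card_of_ordLeq[THEN iffD2])
  moreover have "\<not> A \<approx> B"
  proof
    assume "A \<approx> B"
    then have "|A| =o |B|" by (rule eqpoll_iff_card_of_ordIso[THEN iffD1])
    then show False using not_ordLess_ordIso[OF h] by simp
  qed
  ultimately show ?thesis unfolding lesspoll_def by simp
qed

definition sched_ok :: "'b set \<Rightarrow> (('b \<times> nat) \<times> ('b \<times> nat)) set \<Rightarrow> bool" where
  "sched_ok E Q \<longleftrightarrow> wf Q \<and> trans Q \<and>
     (\<forall>c c' m m'. c \<in> E \<longrightarrow> c' \<in> E \<longrightarrow> (c, m) \<noteq> (c', m') \<longrightarrow> ((c, m), (c', m')) \<in> Q \<or> ((c', m'), (c, m)) \<in> Q) \<and>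
     Q \<subseteq> (E \<times> UNIV) \<times> (E \<times> UNIV) \<and> (\<forall>c n. c \<in> E \<longrightarrow> ((c, n), (c, Suc n)) \<in> Q) \<and>
     (\<forall>s. {t. (t, s) \<in> Q} \<times> (UNIV :: bool set) \<prec> E)"

lemma sched_countable:
  fixes E :: "'b set"
  assumes infE: "infinite E" and cE: "countable E"
  shows "\<exists>Q. sched_ok E Q"
proof -
  obtain f :: "'b \<Rightarrow> nat" where f: "bij_betw f E UNIV" by (rule countableE_infinite[OF cE infE])
  have finj: "inj_on f E" by (rule bij_betw_imp_inj_on[OF f])
  define key where "key s = (f (fst s) + snd s, f (fst s))" for s :: "'b \<times> nat"
  define L where "L = less_than <*lex*> less_than"
  define Q where "Q = {(s, t). s \<in> E \<times> UNIV \<and> t \<in> E \<times> UNIV \<and> (key s, key t) \<in> L}"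
  have "Q \<subseteq> inv_image L key" unfolding Q_def by auto
  then have wfQ: "wf Q" unfolding L_def by (rule wf_subset[OF wf_inv_image[OF wf_lex_prod[OF wf_less_than wf_less_than]]])
  have trL: "trans L" unfolding L_def by (intro trans_lex_prod trans_less_than)
  have trQ: "trans Q"
  proof (rule transI)
    fix x y z assume xy: "(x, y) \<in> Q" and yz: "(y, z) \<in> Q"
    have "(key x, key y) \<in> L" "(key y, key z) \<in> L" using xy yz unfolding Q_def by auto
    then have "(key x, key z) \<in> L" by (rule transD[OF trL])
    then show "(x, z) \<in> Q" using xy yz unfolding Q_def by auto
  qed
  have tot: "((c, m), (c', m')) \<in> Q \<or> ((c', m'), (c, m)) \<in> Q"
    if "c \<in> E" "c' \<in> E" "(c, m) \<noteq> (c', m')" for c c' m m'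
  proof -
    have "key (c, m) \<noteq> key (c', m')"
    proof
      assume "key (c, m) = key (c', m')"
      then have e: "f c = f c'" "f c + m = f c' + m'" unfolding key_def by auto
      have "c = c'" by (rule inj_onD[OF finj e(1) that(1,2)])
      then show False using e that(3) by simp
    qed
    moreover have "(x, y) \<in> L \<or> (y, x) \<in> L" if "x \<noteq> y" for x y :: "nat \<times> nat"
      using that unfolding L_def by (cases x, cases y) auto
    ultimately have "(key (c, m), key (c', m')) \<in> L \<or> (key (c', m'), key (c, m)) \<in> L" by blast
    then show ?thesis using that(1,2) unfolding Q_def by auto
  qed
  have sub: "Q \<subseteq> (E \<times> UNIV) \<times> (E \<times> UNIV)" unfolding Q_def by auto
  have suc: "((c, n), (c, Suc n)) \<in> Q" if "c \<in> E" for c n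
    using that unfolding Q_def L_def key_def by auto
  have small: "{t. (t, s) \<in> Q} \<times> (UNIV :: bool set) \<prec> E" for s
  proof -
    let ?K = "fst (key s)"
    have "{t. (t, s) \<in> Q} \<subseteq> (f -` {..?K} \<inter> E) \<times> {..?K}"
    proof
      fix t assume "t \<in> {t. (t, s) \<in> Q}"
      then have t: "fst t \<in> E" "(key t, key s) \<in> L" unfolding Q_def by auto
      have "fst (key t) \<le> ?K" using t(2) unfolding L_def by (cases "key t", cases "key s") auto
      then have "f (fst t) \<le> ?K" "snd t \<le> ?K" unfolding key_def by auto
      then show "t \<in> (f -` {..?K} \<inter> E) \<times> {..?K}" using t(1) by (cases t) auto
    qed
    moreover have "finite ((f -` {..?K} \<inter> E) \<times> {..?K})"
      using finite_vimage_IntI[OF finite_atMost finj] by auto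
    ultimately have "finite {t. (t, s) \<in> Q}" by (rule finite_subset)
    then have "finite ({t. (t, s) \<in> Q} \<times> (UNIV :: bool set))" by simp
    then show ?thesis by (rule finite_lesspoll_infinite[OF infE])
  qed
  have "sched_ok E Q" unfolding sched_ok_def
  proof (intro conjI allI impI)
    show "wf Q" by (rule wfQ)
    show "trans Q" by (rule trQ)
    show "Q \<subseteq> (E \<times> UNIV) \<times> (E \<times> UNIV)" by (rule sub)
    fix s show "{t. (t, s) \<in> Q} \<times> (UNIV :: bool set) \<prec> E" by (rule small)
  next
    fix c and n :: nat assume "c \<in> E" then show "((c, n), (c, Suc n)) \<in> Q" by (rule suc)
  next
    fix c c' and m m' :: nat assume "c \<in> E" "c' \<in> E" "(c, m) \<noteq> (c', m')"
    then show "((c, m), (c', m')) \<in> Q \<or> ((c', m'), (c, m)) \<in> Q" by (rule tot)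
  qed
  then show ?thesis by blast
qed

lemma countable_lesspoll_uncountable:
  assumes "countable X" "\<not> countable E"
  shows "X \<prec> E"
proof -
  obtain g :: "_ \<Rightarrow> nat" where "inj_on g X" using assms(1) unfolding countable_def by blast
  then have "X \<lesssim> (UNIV :: nat set)" unfolding lepoll_def by blast
  moreover have "(UNIV :: nat set) \<lesssim> E"
  proof -
    have "infinite E" using assms(2) countable_finite by auto
    then show ?thesis by (rule infinite_le_lepoll[THEN iffD1])
  qed
  ultimately have "X \<lesssim> E" by (rule lepoll_trans)
  moreover have "\<not> X \<approx> E"
  proof
    assume "X \<approx> E"
    then have "E \<approx> X" by (rule eqpoll_sym)
    then have "countable E" by (rule countable_eqpoll[OF assms(1)])
    then show False using assms(2) by simp
  qed
  ultimately show ?thesis unfolding lesspoll_def by blast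
qed

lemma sched_uncountable:
  fixes E :: "'b set"
  assumes uE: "\<not> countable E"
  shows "\<exists>Q. sched_ok E Q"
proof -
  have infE: "infinite E" using uE countable_finite by blast
  define r where "r = |E|"
  have wo: "well_order_on E r" using card_of_Well_order[of E] unfolding r_def by (simp add: Field_card_of)
  have lin: "linear_order_on E r" and wfr: "wf (r - Id)" using wo unfolding well_order_on_def by auto
  have trr: "trans r" and antr: "antisym r" and totr: "total_on E r"
    using lin unfolding linear_order_on_def partial_order_on_def preorder_on_def by auto
  define Q :: "(('b \<times> nat) \<times> ('b \<times> nat)) set"
    where "Q = {((c, m), (c', m')). c \<in> E \<and> c' \<in> E \<and> (((c, c') \<in> r \<and> c \<noteq> c') \<or> (c = c' \<and> m < m'))}"
  have "Q \<subseteq> (r - Id) <*lex*> less_than" unfolding Q_def by auto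
  then have wfQ: "wf Q" by (rule wf_subset[OF wf_lex_prod[OF wfr wf_less_than]])
  have trQ: "trans Q"
  proof (rule transI)
    fix x y z assume xy: "(x, y) \<in> Q" and yz: "(y, z) \<in> Q"
    obtain c m c' m' c'' m'' where xyz: "x = (c, m)" "y = (c', m')" "z = (c'', m'')"
      by (cases x, cases y, cases z) auto
    have h1: "c \<in> E" "c' \<in> E" "((c, c') \<in> r \<and> c \<noteq> c') \<or> (c = c' \<and> m < m')"
      using xy xyz unfolding Q_def by auto
    have h2: "c'' \<in> E" "((c', c'') \<in> r \<and> c' \<noteq> c'') \<or> (c' = c'' \<and> m' < m'')"
      using yz xyz unfolding Q_def by auto
    have "((c, c'') \<in> r \<and> c \<noteq> c'') \<or> (c = c'' \<and> m < m'')"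
    proof (cases "c = c'")
      case True then show ?thesis using h1 h2 by auto
    next
      case ne: False
      then have r1: "(c, c') \<in> r" using h1 by auto
      show ?thesis
      proof (cases "c' = c''")
        case True then show ?thesis using r1 ne by auto
      next
        case False
        then have r2: "(c', c'') \<in> r" using h2 by auto
        have r3: "(c, c'') \<in> r" using transD[OF trr r1 r2] .
        have "c \<noteq> c''"
        proof
          assume "c = c''"
          then have "(c', c) \<in> r" using r2 by simp
          then show False using antisymD[OF antr r1] ne by simp
        qed
        then show ?thesis using r3 by auto
      qed
    qed
    then show "(x, z) \<in> Q" using h1 h2 xyz unfolding Q_def by auto
  qed
  have tot: "((c, m), (c', m')) \<in> Q \<or> ((c', m'), (c, m)) \<in> Q"
    if "c \<in> E" "c' \<in> E" "(c, m) \<noteq> (c', m')" for c c' m m'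
  proof (cases "c = c'")
    case True then show ?thesis using that unfolding Q_def by auto
  next
    case False then show ?thesis using that totr unfolding Q_def total_on_def by auto
  qed
  have sub: "Q \<subseteq> (E \<times> UNIV) \<times> (E \<times> UNIV)" unfolding Q_def by auto
  have suc: "((c, n), (c, Suc n)) \<in> Q" if "c \<in> E" for c n using that unfolding Q_def by auto
  have small: "{t. (t, s) \<in> Q} \<times> (UNIV :: bool set) \<prec> E" for s
  proof (cases "fst s \<in> E")
    case False
    then have e: "{t. (t, s) \<in> Q} = {}" unfolding Q_def by auto
    have "finite ({t. (t, s) \<in> Q} \<times> (UNIV :: bool set))" unfolding e by simp
    then show ?thesis by (rule finite_lesspoll_infinite[OF infE])
  next
    case True
    define c0 where "c0 = fst s"
    define U where "U = insert c0 (underS r c0)"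
    have "{t. (t, s) \<in> Q} \<subseteq> U \<times> UNIV"
      unfolding Q_def U_def c0_def underS_def by auto
    then have "{t. (t, s) \<in> Q} \<times> (UNIV :: bool set) \<lesssim> (U \<times> (UNIV :: nat set)) \<times> (UNIV :: bool set)"
      by (intro subset_imp_lepoll) auto
    moreover have "(U \<times> (UNIV :: nat set)) \<times> (UNIV :: bool set) \<prec> E"
    proof (cases "finite U")
      case True
      have cU: "countable U" by (rule countable_finite[OF True])
      have "countable ((U \<times> (UNIV :: nat set)) \<times> (UNIV :: bool set))"
        by (intro countable_SIGMA cU) auto
      then show ?thesis by (rule countable_lesspoll_uncountable[OF _ uE])
    next
      case False
      have co: "Card_order |E|" by (rule card_of_Card_order)
      have fE: "c0 \<in> Field |E|" using True unfolding c0_def Field_card_of .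
      have us: "|underS r c0| <o r" unfolding r_def by (rule card_of_underS[OF co fE])
      have infU0: "infinite (underS r c0)" using False unfolding U_def by simp
      have "|U| =o |underS r c0|"
        using infinite_insert_eqpoll[OF infU0] unfolding U_def eqpoll_iff_card_of_ordIso .
      then have Ult: "|U| <o |E|" using us unfolding r_def by (rule ordIso_ordLess_trans)
      have nU: "|UNIV :: nat set| \<le>o |U|" using False infinite_iff_card_of_nat[of U] by simp
      have i1: "|U \<times> (UNIV :: nat set)| =o |U|"
        by (rule card_of_Times_infinite[OF False UNIV_not_empty nU, THEN conjunct1])
      have infUN: "infinite (U \<times> (UNIV :: nat set))"
      proof
        assume "finite (U \<times> (UNIV :: nat set))"
        then have "finite U" by (rule finite_cartesian_productD1) simp
        then show False using False by simp
      qed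
      have i2: "|(U \<times> (UNIV :: nat set)) \<times> (UNIV :: bool set)| =o |U \<times> (UNIV :: nat set)|"
        by (rule card_of_Times_infinite[OF infUN UNIV_not_empty ordLeq3_finite_infinite[OF finite_UNIV infUN], THEN conjunct1])
      have "|(U \<times> (UNIV :: nat set)) \<times> (UNIV :: bool set)| =o |U|" using i2 i1 by (rule ordIso_transitive)
      then have "|(U \<times> (UNIV :: nat set)) \<times> (UNIV :: bool set)| <o |E|" using Ult by (rule ordIso_ordLess_trans)
      then show ?thesis by (rule lesspoll_of_card)
    qed
    ultimately show ?thesis by (rule lesspoll_trans1)
  qed
  have "sched_ok E Q" unfolding sched_ok_def
  proof (intro conjI allI impI)
    show "wf Q" by (rule wfQ)
    show "trans Q" by (rule trQ)
    show "Q \<subseteq> (E \<times> UNIV) \<times> (E \<times> UNIV)" by (rule sub)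
    fix s show "{t. (t, s) \<in> Q} \<times> (UNIV :: bool set) \<prec> E" by (rule small)
  next
    fix c and n :: nat assume "c \<in> E" then show "((c, n), (c, Suc n)) \<in> Q" by (rule suc)
  next
    fix c c' and m m' :: nat assume "c \<in> E" "c' \<in> E" "(c, m) \<noteq> (c', m')"
    then show "((c, m), (c', m')) \<in> Q \<or> ((c', m'), (c, m)) \<in> Q" by (rule tot)
  qed
  then show ?thesis by blast
qed

lemma sched_exists: "infinite E \<Longrightarrow> \<exists>Q. sched_ok E Q"
proof (cases "countable E")
  case True
  assume "infinite E" then show ?thesis by (rule sched_countable[OF _ True])
next
  case False then show ?thesis by (rule sched_uncountable)
qed

theorem theorem9:
  fixes scale :: "'a::field \<Rightarrow> 'v::ab_group_add \<Rightarrow> 'v"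
    and u :: "'v \<Rightarrow> 'v"
  assumes "vector_space scale"
    and "infinite_dimensional scale"
    and "Vector_Spaces.linear scale scale u"
    and "\<forall>c. \<not> dominant_eigenvalue scale u c"
  shows "\<forall>a. \<exists>v. Vector_Spaces.linear scale scale v \<and>
           (\<forall>x. v (v x) = scale a (v x)) \<and>
           elementary scale (\<lambda>x. u x - v x)"
proof
  fix a
  have VSf: "VS scale" using assms(1) by (simp add: VS_def)
  interpret V: VS scale by (rule VSf)
  obtain E where E: "E \<subseteq> UNIV" "V.independent E" "UNIV \<subseteq> V.span E"
    by (rule V.maximal_independent_subset[of UNIV])
  have spE: "V.span E = UNIV" using E(3) by auto
  have infE: "infinite E"
  proof
    assume "finite E"
    then show False using assms(2) spE unfolding infinite_dimensional_def by blast
  qed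
  have nodom: "\<not> C \<prec> E" if "V.independent C" "V.span C = range (\<lambda>x. u x - scale c x)" for c C
  proof
    assume "C \<prec> E"
    then have "rank_lt_dim scale (\<lambda>x. u x - scale c x)"
      unfolding rank_lt_dim_def using E(2) spE that by blast
    then show False using assms(4) unfolding dominant_eigenvalue_def by blast
  qed
  obtain Q where Q: "sched_ok E Q" using sched_exists[OF infE] by blast
  have Q1: "wf Q" "trans Q" using Q unfolding sched_ok_def by auto
  have Q2: "\<And>c c' m m'. c \<in> E \<Longrightarrow> c' \<in> E \<Longrightarrow> (c, m) \<noteq> (c', m') \<Longrightarrow>
        ((c, m), (c', m')) \<in> Q \<or> ((c', m'), (c, m)) \<in> Q"
    using Q unfolding sched_ok_def by blast
  have Q3: "Q \<subseteq> (E \<times> UNIV) \<times> (E \<times> UNIV)" using Q unfolding sched_ok_def by blast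
  have Q4: "\<And>c n. c \<in> E \<Longrightarrow> ((c, n), (c, Suc n)) \<in> Q" using Q unfolding sched_ok_def by blast
  have Q5: "\<And>s. {t. (t, s) \<in> Q} \<times> (UNIV :: bool set) \<prec> E" using Q unfolding sched_ok_def by blast
  interpret C: Constr scale u E a Q
    by (rule Constr.intro[OF Setup.intro[OF VSf Setup_axioms.intro[OF assms(3) E(2) spE infE nodom]]
        Constr_axioms.intro[OF Q1 Q2 Q3 Q4 Q5]])
  show "\<exists>v. Vector_Spaces.linear scale scale v \<and> (\<forall>x. v (v x) = scale a (v x)) \<and> elementary scale (\<lambda>x. u x - v x)"
    by (rule C.constr_main)
qed

end
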